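(* For $t\in[0,1]$ define on $\mathbb{R}_+$ $$g_t(x)=\frac{t+1}{2}\,e^{-x}\left(x-1+\sqrt{\frac{1-t}{1+t}}\right)^2,$$ and let $f_0(x)=e^{-x}$. Then $f_0\succ g_t$ for every $t\in[0,1]$.
   Context: Majorization on $\mathbb{R}_+$ (Lebesgue measure): $f\succ g$ means $\int_0^\infty f=\int_0^\infty g$ and $\int_0^\infty[f(x)-t]_+dx\ge\int_0^\infty[g(x)-t]_+dx$ for all $t\ge0$, where $[z]_+=\max(z,0)$. *)

theory Defs
  imports "HOL-Analysis.Analysis"
begin

definition majorizes :: "(real \<Rightarrow> real) \<Rightarrow> (real \<Rightarrow> real) \<Rightarrow> bool" where
  "majorizes f g \<longleftrightarrow>
     set_integrable lborel {0..} f \<and> set_integrable lborel {0..} g \<and>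
     (LINT x:{0..}|lborel. f x) = (LINT x:{0..}|lborel. g x) \<and>
     (\<forall>t::real. t \<ge> 0 \<longrightarrow>
        (LINT x:{0..}|lborel. max (f x - t) 0) \<ge> (LINT x:{0..}|lborel. max (g x - t) 0))"

definition f0 :: "real \<Rightarrow> real" where
  "f0 x = exp (- x)"

definition g :: "real \<Rightarrow> real \<Rightarrow> real" where
  "g t x = (t + 1) / 2 * exp (- x) * (x - 1 + sqrt ((1 - t) / (1 + t)))\<^sup>2"

end

theory Submission imports Defs "HOL-Real_Asymp.Real_Asymp"
begin

lemma tail_int:
  fixes a b :: real
  shows "((\<lambda>x. exp(-x) * (x-a)^2) has_integral exp(-b) * ((b-a)^2 + 2*(b-a) + 2)) {b..}"
proof (rule has_integral_to_inf)
  define P where "P x = exp(-x) * ((x-a)^2 + 2*(x-a) + 2)" for x :: real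
  have FT: "((\<lambda>x. exp(-x) * (x-a)^2) has_integral (P b - P y)) {b..y}" if "y \<ge> b" for y
  proof -
    have "((\<lambda>x. exp(-x) * (x-a)^2) has_integral ((-P y) - (-P b))) {b..y}"
      using that unfolding P_def
      by (intro fundamental_theorem_of_calculus)
         (auto intro!: derivative_eq_intros
               simp flip: has_real_derivative_iff_has_vector_derivative simp: algebra_simps power2_eq_square)
    then show ?thesis by simp
  qed
  show "(\<lambda>x. exp(-x) * (x-a)^2) integrable_on {b..y}" for y
    by (intro integrable_continuous_interval continuous_intros)
  show "0 \<le> exp (- x) * (x - a)\<^sup>2" for x by simp
  have "\<forall>\<^sub>F y in at_top. integral {b..y} (\<lambda>x. exp(-x) * (x-a)^2) = P b - P y"
    using FT eventually_at_top_linorder integral_unique by blast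
  moreover have "((\<lambda>y. P b - P y) \<longlongrightarrow> P b) at_top"
    unfolding P_def by real_asymp
  ultimately show "((\<lambda>y. integral {b..y} (\<lambda>x. exp(-x) * (x-a)^2)) \<longlongrightarrow> exp(-b) * ((b-a)^2 + 2*(b-a) + 2)) at_top"
    by (simp add: filterlim_cong P_def)
qed

lemma to_lborel:
  fixes \<phi> :: "real \<Rightarrow> real"
  assumes c: "continuous_on UNIV \<phi>" and ai: "\<phi> absolutely_integrable_on {0..}"
  shows "set_integrable lborel {0..} \<phi>" "(LINT x:{0..}|lborel. \<phi> x) = integral {0..} \<phi>"
proof -
  have m: "(\<lambda>x. indicator {0..} x *\<^sub>R \<phi> x) \<in> borel_measurable lborel"
    using borel_measurable_continuous_onI[OF c] by measurable
  show si: "set_integrable lborel {0..} \<phi>"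
    using ai integrable_completion[OF m] unfolding set_integrable_def by simp
  show "(LINT x:{0..}|lborel. \<phi> x) = integral {0..} \<phi>"
    using set_borel_integral_eq_integral(2)[OF si] .
qed

lemma absint:
  fixes \<phi> h :: "real \<Rightarrow> real"
  assumes c: "continuous_on UNIV \<phi>" and hi: "h integrable_on {0..}"
    and b: "\<And>x. x \<ge> 0 \<Longrightarrow> \<bar>\<phi> x\<bar> \<le> h x"
  shows "\<phi> absolutely_integrable_on {0..}"
proof (rule measurable_bounded_by_integrable_imp_absolutely_integrable[OF _ _ hi])
  show "\<phi> \<in> borel_measurable (lebesgue_on {0..})"
    by (rule continuous_imp_measurable_on_sets_lebesgue) (auto intro: continuous_on_subset[OF c])
  show "{0::real..} \<in> sets lebesgue" using borel_closed[OF closed_atLeast[of "0::real"]] by (intro sets_completionI_sets) simp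
  show "x \<in> {0..} \<Longrightarrow> norm (\<phi> x) \<le> h x" for x using b by auto
qed

lemma exp_int: "((\<lambda>x::real. exp(-x)) has_integral exp(-b)) {b..}"
  using has_integral_exp_minus_to_infinity[of 1 b] by simp

lemma quad_int:
  fixes lam a :: real
  shows "((\<lambda>x. lam*(x-a)^2/4) has_integral 2*lam/3) {a..a+2}"
proof -
  have "((\<lambda>x. lam*(x-a)^2/4) has_integral (lam*((a+2)-a)^3/12 - lam*(a-a)^3/12)) {a..a+2}"
    by (intro fundamental_theorem_of_calculus)
       (auto intro!: derivative_eq_intros
             simp flip: has_real_derivative_iff_has_vector_derivative simp: field_simps power2_eq_square power3_eq_cube)
  then show ?thesis by simp
qed

lemma G_int:
  fixes a b c :: real
  shows "((\<lambda>x. c*exp(-x)*(x-a)^2) has_integral c*exp(-b)*((b-a)^2 + 2*(b-a) + 2)) {b..}"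
  using has_integral_mult_right[OF tail_int[of a b], of c] by (simp add: mult.assoc)

lemma G_mono:
  fixes a c x y :: real
  assumes "a + 2 \<le> x" "x \<le> y" "0 \<le> c"
  shows "c*exp(-y)*(y-a)^2 \<le> c*exp(-x)*(x-a)^2"
proof -
  define d where "d = y - x"
  have d: "0 \<le> d" using assms by (simp add: d_def)
  have e1: "1 + d/2 \<le> exp(d/2)" using exp_ge_add_one_self[of "d/2"] by simp
  have dd: "0 \<le> d*((x-a)/2 - 1)" using assms d by (intro mult_nonneg_nonneg) auto
  have "(x-a)*(1 + d/2) - (y-a) = d*((x-a)/2 - 1)" by (simp add: d_def field_simps)
  then have "y - a \<le> (x-a)*(1 + d/2)" using dd by linarith
  also have "\<dots> \<le> (x-a)*exp(d/2)" using e1 assms by (intro mult_left_mono) auto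
  finally have "(y-a)^2 \<le> ((x-a)*exp(d/2))^2" using assms by (intro power_mono) auto
  also have "\<dots> = (x-a)^2 * exp d" by (simp add: power_mult_distrib power2_eq_square flip: exp_add)
  finally have *: "(y-a)^2 \<le> (x-a)^2 * exp d" .
  have "c*exp(-y)*(y-a)^2 \<le> c*exp(-y)*((x-a)^2 * exp d)"
    using * assms by (intro mult_left_mono) auto
  also have "\<dots> = c*exp(-x)*(x-a)^2"
    by (simp add: d_def algebra_simps flip: exp_add)
  finally show ?thesis .
qed

lemma G_bound:
  fixes v :: real
  assumes "0 \<le> v"
  shows "exp(-v) * v^2 \<le> 4*exp(-2)"
proof -
  have "v/2 \<le> exp(v/2 - 1)" using exp_ge_add_one_self[of "v/2 - 1"] by simp
  then have "(v/2)^2 \<le> exp(v/2-1)^2" using assms by (intro power_mono) auto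
  also have "\<dots> = exp(v - 2)" by (simp flip: exp_add add: power2_eq_square)
  finally have "v^2 \<le> 4*exp(v-2)" by (simp add: power_divide)
  then have "exp(-v) * v^2 \<le> exp(-v) * (4*exp(v-2))" by (intro mult_left_mono) auto
  also have "\<dots> = 4*exp(-2)" by (simp flip: exp_add)
  finally show ?thesis .
qed

lemma final_ineq:
  fixes a c u :: real
  assumes u: "2 \<le> u" and lnc: "a - 1 \<le> ln c"
  shows "0 \<le> 2*ln u + ln c - a + 2/u + 2/u^2 - 4/3"
proof -
  have l2: "2/3 \<le> ln (2::real)" by (rule ln2_ge_two_thirds)
  have "ln (2/u) \<le> 2/u - 1" using u by (intro ln_le_minus_one) auto
  moreover have "ln (2/u) = ln 2 - ln u" using u by (simp add: ln_div)
  ultimately have lu: "ln u \<ge> ln 2 + 1 - 2/u" by linarith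
  define z where "z = 1/u"
  have "2/u = 2*z" "2/u^2 = 2*z^2" by (simp_all add: z_def power2_eq_square)
  moreover have "0 \<le> (1 - z)^2 + z^2" by simp
  ultimately show ?thesis using lu l2 lnc by (simp add: power2_eq_square algebra_simps)
qed

lemma key:
  fixes a c lam :: real
  assumes a: "0 \<le> a" "a \<le> 1" and c: "0 < c" "c \<le> 1" and tot: "c*(a^2 - 2*a + 2) = 1"
    and lnc: "a - 1 \<le> ln c" and lam: "0 \<le> lam"
  shows "integral {0..} (\<lambda>x. max (c*exp(-x)*(x-a)^2 - lam) 0) \<le> integral {0..} (\<lambda>x. max (exp(-x) - lam) 0)"
proof -
  define G where "G x = c*exp(-x)*(x-a)^2" for x
  have G0: "0 \<le> G x" for x using c by (simp add: G_def)
  have contG: "continuous_on UNIV G" unfolding G_def by (intro continuous_intros)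
  have IG: "(G has_integral 1) {0..}" using G_int[of c a 0] tot unfolding G_def
    by (simp add: power2_eq_square algebra_simps)
  have IF: "((\<lambda>x::real. exp(-x)) has_integral 1) {0..}" using exp_int[of 0] by simp
  define M where "M = 4*c*exp(-a-2)"
  have e2: "4 \<le> exp (2::real)"
  proof -
    have "2 \<le> exp (1::real)" using exp_ge_add_one_self[of 1] by simp
    then have "2*2 \<le> exp (1::real) * exp 1" by (intro mult_mono) auto
    then show ?thesis by (simp flip: exp_add)
  qed
  have M1: "M \<le> 1"
  proof -
    have "exp(-a-2) = exp(-a) * exp(-2)" by (simp flip: exp_add)
    moreover have "exp(-a) \<le> 1" using a by simp
    moreover have "exp(-2::real) \<le> 1/4" using e2 by (simp add: exp_minus field_simps)
    ultimately have "exp(-a-2) \<le> 1/4"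
      by (metis mult_le_one exp_ge_zero order.trans mult_right_mono mult_1_left)
    then have "c * exp(-a-2) \<le> 1 * (1/4)" using c by (intro mult_mono) auto
    then show ?thesis unfolding M_def by simp
  qed
  have GM: "G x \<le> M" if "a \<le> x" for x
  proof -
    have "G x = c*exp(-a)*(exp(-(x-a))*(x-a)^2)" by (simp add: G_def algebra_simps flip: exp_add)
    also have "\<dots> \<le> c*exp(-a)*(4*exp(-2))" using that c by (intro mult_left_mono G_bound) auto
    also have "\<dots> = M" by (simp add: M_def algebra_simps flip: exp_add)
    finally show ?thesis .
  qed
  have Gle: "G x \<le> exp(-x)" if "0 \<le> x" "x \<le> a" for x
  proof -
    have "(x-a)^2 \<le> 1" using that a by (simp add: abs_le_square_iff[symmetric] abs_square_le_1)
    then have "c*(x-a)^2 \<le> 1" using c by (metis mult_le_one less_imp_le zero_le_power2)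
    then have "exp(-x)*(c*(x-a)^2) \<le> exp(-x)*1" by (intro mult_left_mono) auto
    then show ?thesis by (simp add: G_def algebra_simps)
  qed
  have intmax: "(\<lambda>x. max (h x - lam) 0) integrable_on {0..}"
    if "continuous_on UNIV h" "h integrable_on {0..}" "\<And>x. 0 \<le> h x" for h :: "real \<Rightarrow> real"
  proof -
    have "(\<lambda>x. max (h x - lam) 0) absolutely_integrable_on {0..}"
      using that lam by (intro absint[OF _ that(2)] continuous_intros) auto
    then show ?thesis using set_lebesgue_integral_eq_integral(1) by blast
  qed
  have intmin: "(\<lambda>x. min (h x) lam) integrable_on {0..}"
    if "continuous_on UNIV h" "h integrable_on {0..}" "\<And>x. 0 \<le> h x" for h :: "real \<Rightarrow> real"
  proof -
    have "(\<lambda>x. min (h x) lam) absolutely_integrable_on {0..}"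
      using that lam by (intro absint[OF _ that(2)] continuous_intros) auto
    then show ?thesis using set_lebesgue_integral_eq_integral(1) by blast
  qed
  have contF: "continuous_on UNIV (\<lambda>x::real. exp(-x))" by (intro continuous_intros)
  have iG: "G integrable_on {0..}" using IG by blast
  have iF: "(\<lambda>x::real. exp(-x)) integrable_on {0..}" using IF by blast
  show ?thesis
  proof (cases "M \<le> lam")
    case True
    have "integral {0..} (\<lambda>x. max (G x - lam) 0) \<le> integral {0..} (\<lambda>x. max (exp(-x) - lam) 0)"
    proof (rule integral_le[OF intmax[OF contG iG G0] intmax[OF contF iF]])
      fix x :: real assume "x \<in> {0..}"
      then show "max (G x - lam) 0 \<le> max (exp(-x) - lam) 0"
        using Gle[of x] GM[of x] True by (cases "x \<le> a") auto
    qed auto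
    then show ?thesis by (simp add: G_def)
  next
    case False
    then have lamM: "lam < M" by simp
    have imaxG: "integral {0..} (\<lambda>x. max (G x - lam) 0) = 1 - integral {0..} (\<lambda>x. min (G x) lam)"
    proof -
      have "((\<lambda>x. G x - min (G x) lam) has_integral (1 - integral {0..} (\<lambda>x. min (G x) lam))) {0..}"
        using IG intmin[OF contG iG G0] by (intro has_integral_diff) auto
      moreover have "(\<lambda>x. G x - min (G x) lam) = (\<lambda>x. max (G x - lam) 0)" by (auto simp: fun_eq_iff)
      ultimately show ?thesis by (simp add: integral_unique)
    qed
    have imaxF: "integral {0..} (\<lambda>x. max (exp(-x) - lam) 0) = 1 - integral {0..} (\<lambda>x::real. min (exp(-x)) lam)"
    proof -
      have "((\<lambda>x. exp(-x) - min (exp(-x)) lam) has_integral (1 - integral {0..} (\<lambda>x::real. min (exp(-x)) lam))) {0..}"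
        using IF intmin[OF contF iF] by (intro has_integral_diff) auto
      moreover have "(\<lambda>x::real. exp(-x) - min (exp(-x)) lam) = (\<lambda>x. max (exp(-x) - lam) 0)" by (auto simp: fun_eq_iff)
      ultimately show ?thesis by (simp add: integral_unique)
    qed
    show ?thesis
    proof (cases "lam = 0")
      case True
      have e1: "(\<lambda>x. min (G x) lam) = (\<lambda>x. 0)" using True G0 by (auto simp: fun_eq_iff min_def intro: order.antisym)
      have e2: "(\<lambda>x::real. min (exp(-x)) lam) = (\<lambda>x. 0)" using True by (auto simp: fun_eq_iff min_def)
      have A: "integral {0..} (\<lambda>x. max (G x - lam) 0) = 1" using imaxG e1 by simp
      have B: "integral {0..} (\<lambda>x. max (exp(-x) - lam) 0) = 1" using imaxF e2 by simp
      show ?thesis using A B by (simp add: G_def)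
    next
      case False
      then have lp: "0 < lam" using lam by simp
      define L where "L = - ln lam"
      have L0: "0 \<le> L" using lp lamM M1 by (simp add: L_def)
      have eL: "exp(-L) = lam" using lp by (simp add: L_def)
      have IminF: "((\<lambda>x::real. min (exp(-x)) lam) has_integral (lam*L + lam)) {0..}"
      proof -
        have h1: "((\<lambda>x::real. min (exp(-x)) lam) has_integral (lam*L)) {0..L}"
        proof -
          have hc: "((\<lambda>x::real. lam) has_integral (lam*L)) {0..L}" using has_integral_const_real[of lam 0 L] L0 by (simp add: content_real mult.commute)
          have e: "min (exp(-x)) lam = lam" if "x \<in> {0..L}" for x
          proof -
            have "exp(-L) \<le> exp(-x)" using that by simp
            then show ?thesis using eL by simp
          qed
          show ?thesis using hc by (rule has_integral_eq[rotated]) (use e in auto)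
        qed
        have h2: "((\<lambda>x::real. min (exp(-x)) lam) has_integral lam) {L..}"
        proof -
          have e: "min (exp(-x)) lam = exp(-x)" if "x \<in> {L..}" for x
          proof -
            have "exp(-x) \<le> exp(-L)" using that by simp
            then show ?thesis using eL by simp
          qed
          have hi: "((\<lambda>x::real. exp(-x)) has_integral lam) {L..}" using exp_int[of L] eL by simp
          show ?thesis using hi by (rule has_integral_eq[rotated]) (use e in auto)
        qed
        have "((\<lambda>x::real. min (exp(-x)) lam) has_integral (lam*L + lam)) ({0..L} \<union> {L..})"
          by (rule has_integral_Un[OF h1 h2]) (auto intro: negligible_subset[of "{L}"])
        moreover have "{0..L} \<union> {L..} = {0::real..}" using L0 by auto
        ultimately show ?thesis by simp
      qed
      have lim: "(G \<longlongrightarrow> 0) at_top" unfolding G_def by real_asymp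
      then have "\<forall>\<^sub>F x in at_top. G x < lam" using lp by (simp add: order_tendsto_iff)
      then obtain N where N: "\<And>x. x \<ge> N \<Longrightarrow> G x < lam" by (auto simp: eventually_at_top_linorder)
      define X where "X = max N (a+2)"
      have GX: "G X \<le> lam" using N[of X] by (simp add: X_def)
      have GA: "lam \<le> G (a+2)" using lamM by (simp add: G_def M_def algebra_simps flip: exp_add)
      obtain x3 where x3: "a + 2 \<le> x3" "x3 \<le> X" "G x3 = lam"
        using IVT2'[of G X lam "a+2"] GX GA contG by (auto simp: X_def intro: continuous_on_subset)
      define u where "u = x3 - a"
      have u2: "2 \<le> u" using x3 by (simp add: u_def)
      have x30: "0 \<le> x3" using x3 a by simp
      define l where "l x = (if x \<le> a then 0 else if x \<le> a + 2 then lam*(x-a)^2/4 else if x \<le> x3 then lam else G x)" for x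
      define V where "V = 2*lam/3 + lam*(x3 - (a+2)) + c*exp(-x3)*(u^2 + 2*u + 2)"
      have Il: "(l has_integral V) {0..}"
      proof -
        have p1: "(l has_integral 0) {0..a}"
          by (rule has_integral_eq[rotated, OF has_integral_0]) (auto simp: l_def)
        have p2: "(l has_integral (2*lam/3)) {a..a+2}"
          by (rule has_integral_eq[rotated, OF quad_int]) (auto simp: l_def)
        have p3: "(l has_integral (lam*(x3 - (a+2)))) {a+2..x3}"
        proof -
          have "((\<lambda>x::real. lam) has_integral (lam*(x3 - (a+2)))) {a+2..x3}" using has_integral_const_real[of lam "a+2" x3] x3 by (simp add: content_real mult.commute)
          then show ?thesis by (rule has_integral_eq[rotated]) (auto simp: l_def power2_eq_square)
        qed
        have p4: "(l has_integral c*exp(-x3)*(u^2 + 2*u + 2)) {x3..}"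
        proof -
          have "(G has_integral c*exp(-x3)*(u^2 + 2*u + 2)) {x3..}"
            using G_int[of c a x3] unfolding G_def u_def by simp
          moreover have "G x = l x" if "x \<in> {x3..}" for x
          proof (cases "x = x3")
            case True then show ?thesis using x3 a by (auto simp: l_def)
          next
            case False then show ?thesis using that x3 a by (auto simp: l_def)
          qed
          ultimately show ?thesis by (rule has_integral_eq[rotated])
        qed
        have "(l has_integral (0 + 2*lam/3)) {0..a+2}"
          using a by (intro has_integral_combine[OF _ _ p1 p2]) auto
        then have "(l has_integral (0 + 2*lam/3 + lam*(x3 - (a+2)))) {0..x3}"
          using a x3 by (intro has_integral_combine[OF _ _ _ p3]) auto
        then have "(l has_integral (0 + 2*lam/3 + lam*(x3 - (a+2)) + c*exp(-x3)*(u^2 + 2*u + 2))) ({0..x3} \<union> {x3..})"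
          by (rule has_integral_Un[OF _ p4]) (auto intro: negligible_subset[of "{x3}"])
        moreover have "{0..x3} \<union> {x3..} = {0::real..}" using x30 by auto
        ultimately show ?thesis by (simp add: V_def)
      qed
      have lle: "l x \<le> min (G x) lam" if "x \<in> {0..}" for x
      proof -
        consider "x \<le> a" | "a < x" "x \<le> a+2" | "a+2 < x" "x \<le> x3" | "x3 < x" by linarith
        then show ?thesis
        proof cases
          case 1 then show ?thesis using G0[of x] lp by (simp add: l_def)
        next
          case 2
          have sq: "(x-a)^2 \<le> 2^2" using 2 by (intro power_mono) auto
          have "lam \<le> 4*c*exp(-x)"
          proof -
            have "exp(-a-2) \<le> exp(-x)" using 2 by simp
            then have "4*c*exp(-a-2) \<le> 4*c*exp(-x)" using c by simp
            then show ?thesis using lamM unfolding M_def by simp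
          qed
          then have "lam*(x-a)^2/4 \<le> 4*c*exp(-x)*(x-a)^2/4"
            by (intro divide_right_mono mult_right_mono) auto
          moreover have "lam*(x-a)^2/4 \<le> lam" using sq lp by (simp add: mult_le_cancel_left1)
          ultimately show ?thesis using 2 by (simp add: l_def G_def)
        next
          case 3
          have "G x3 \<le> G x" unfolding G_def using 3 c by (intro G_mono) auto
          then show ?thesis using 3 x3 by (simp add: l_def)
        next
          case 4
          have "G x \<le> G x3" unfolding G_def using 4 x3 c by (intro G_mono) auto
          then show ?thesis using 4 x3 a by (simp add: l_def)
        qed
      qed
      have "V \<le> integral {0..} (\<lambda>x. min (G x) lam)"
        using integral_le[OF _ intmin[OF contG iG G0] lle] Il by (auto simp: integral_unique)
      moreover have "lam*L + lam \<le> V"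
      proof -
        have lamu: "lam = c*exp(-x3)*u^2" using x3 by (simp add: G_def u_def)
        have up: "0 < u" using u2 by simp
        have lnlam: "ln lam = ln c - x3 + 2*ln u"
          using lamu c up by (simp add: ln_mult ln_realpow)
        have tail: "c*exp(-x3)*(u^2 + 2*u + 2) = lam*(1 + 2/u + 2/u^2)"
          using lamu up by (simp add: field_simps power2_eq_square)
        have F: "0 \<le> 2*ln u + ln c - a + 2/u + 2/u^2 - 4/3" by (rule final_ineq[OF u2 lnc])
        have V2: "V = 2*lam/3 + lam*(x3 - (a+2)) + lam*(1 + 2/u + 2/u^2)"
          unfolding V_def by (simp only: tail)
        have x3u: "x3 = a + u" by (simp add: u_def)
        have "V - (lam*L + lam) = lam*(2*ln u + ln c - a + 2/u + 2/u^2 - 4/3)"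
          unfolding V2 L_def lnlam x3u by (simp add: algebra_simps)
        moreover have "0 \<le> lam*(2*ln u + ln c - a + 2/u + 2/u^2 - 4/3)" using lp F by simp
        ultimately show ?thesis by linarith
      qed
      moreover have "integral {0..} (\<lambda>x::real. min (exp(-x)) lam) = lam*L + lam"
        using IminF by (simp add: integral_unique)
      ultimately show ?thesis using imaxG imaxF by (simp add: G_def)
    qed
  qed
qed

lemma conv_all:
  fixes G :: "real \<Rightarrow> real" and I :: real
  assumes c: "continuous_on UNIV G" and IG: "(G has_integral I) {0..}" and G0: "\<And>x. 0 \<le> G x"
  shows "set_integrable lborel {0..} G" "(LINT x:{0..}|lborel. G x) = I"
    "\<And>lam. 0 \<le> lam \<Longrightarrow> (LINT x:{0..}|lborel. max (G x - lam) 0) = integral {0..} (\<lambda>x. max (G x - lam) 0)"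
proof -
  have iG: "G integrable_on {0..}" using IG by blast
  have ai: "G absolutely_integrable_on {0..}" using absint[OF c iG] G0 by auto
  show "set_integrable lborel {0..} G" using to_lborel[OF c ai] by simp
  show "(LINT x:{0..}|lborel. G x) = I" using to_lborel(2)[OF c ai] IG by (simp add: integral_unique)
  fix lam :: real assume lam: "0 \<le> lam"
  have c2: "continuous_on UNIV (\<lambda>x. max (G x - lam) 0)" using c by (intro continuous_intros)
  have "(\<lambda>x. max (G x - lam) 0) absolutely_integrable_on {0..}"
    using absint[OF c2 iG] G0 lam by auto
  then show "(LINT x:{0..}|lborel. max (G x - lam) 0) = integral {0..} (\<lambda>x. max (G x - lam) 0)"
    using to_lborel(2)[OF c2] by simp
qed

theorem mainTheorem9:
  fixes t :: real
  assumes "0 \<le> t" and "t \<le> 1"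
  shows "majorizes f0 (g t)"
proof -
  define s where "s = sqrt ((1 - t) / (1 + t))"
  define a where "a = 1 - s"
  define c where "c = (t + 1) / 2"
  have t1: "0 < 1 + t" using assms by simp
  have q0: "0 \<le> (1-t)/(1+t)" using assms by simp
  have q1: "(1-t)/(1+t) \<le> 1" using assms t1 by (simp add: divide_le_eq_1)
  have s0: "0 \<le> s" using q0 by (simp add: s_def)
  have s1: "s \<le> 1" using q1 by (simp add: s_def)
  have ss: "s^2 = (1-t)/(1+t)" using q0 by (simp add: s_def)
  have a0: "0 \<le> a" "a \<le> 1" using s0 s1 by (simp_all add: a_def)
  have c0: "0 < c" "c \<le> 1" using assms by (simp_all add: c_def)
  have tot: "c*(a^2 - 2*a + 2) = 1"
  proof -
    have "a^2 - 2*a + 2 = 1 + s^2" by (simp add: a_def power2_eq_square algebra_simps)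
    then show ?thesis using t1 by (simp add: ss c_def field_simps)
  qed
  have lnc: "a - 1 \<le> ln c"
  proof -
    have "ln (1/c) \<le> 1/c - 1" using c0 by (intro ln_le_minus_one) auto
    then have "1 - 1/c \<le> ln c" using c0 by (simp add: ln_div)
    moreover have "1 - 1/c = -(s^2)" using t1 by (simp add: ss c_def field_simps)
    moreover have "s^2 \<le> s" using s0 s1 by (simp add: power2_eq_square mult_left_le)
    ultimately show ?thesis by (simp add: a_def)
  qed
  have gdef: "g t = (\<lambda>x. c*exp(-x)*(x-a)^2)"
    by (simp add: fun_eq_iff g_def c_def a_def s_def algebra_simps)
  have fdef: "f0 = (\<lambda>x. exp(-x))" by (simp add: fun_eq_iff f0_def)
  have cG: "continuous_on UNIV (\<lambda>x::real. c*exp(-x)*(x-a)^2)" by (intro continuous_intros)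
  have cF: "continuous_on UNIV (\<lambda>x::real. exp(-x))" by (intro continuous_intros)
  have IG: "((\<lambda>x. c*exp(-x)*(x-a)^2) has_integral 1) {0..}" using G_int[of c a 0] tot
    by (simp add: power2_eq_square algebra_simps)
  have IF: "((\<lambda>x::real. exp(-x)) has_integral 1) {0..}" using exp_int[of 0] by simp
  have G0: "\<And>x. 0 \<le> c*exp(-x)*(x-a)^2" using c0 by simp
  note CG = conv_all[OF cG IG G0]
  note CF = conv_all[OF cF IF]
  show ?thesis
    unfolding majorizes_def gdef fdef
  proof (intro conjI allI impI)
    show "set_integrable lborel {0..} (\<lambda>x::real. exp(-x))" using CF by simp
    show "set_integrable lborel {0..} (\<lambda>x. c*exp(-x)*(x-a)^2)" using CG by simp
    show "(LINT x:{0..}|lborel. exp(-x)) = (LINT x:{0..}|lborel. c*exp(-x)*(x-a)^2)" using CF CG by simp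
    fix lam :: real assume lam: "0 \<le> lam"
    show "(LINT x:{0..}|lborel. max (c*exp(-x)*(x-a)^2 - lam) 0) \<le> (LINT x:{0..}|lborel. max (exp(-x) - lam) 0)"
      using CG(3)[OF lam] CF key[OF a0 c0 tot lnc lam] lam by simp
  qed
qed

end
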